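(* Let $a>0$ and, for $x_i\in\mathbb{R}$, let $P_+^a(x_i)$ (resp. $P_-^a(x_i)$) be the smallest $x>x_i$ at which the solution of $y'=-ay-\sin(3\pi x/2)$ (resp. $y'=-ay-\sin(\pi x/2)$) with $y(x_i)=0$ vanishes. Then $$P_+^a(4n-2)\in\left(4n-\tfrac43,\,4n-\tfrac23\right)\quad\forall n\in\mathbb{N}\setminus\{0\},\qquad P_-^a(4n)\in(4n+2,\,4n+4)\quad\forall n\in\mathbb{N}.$$ *)

theory Defs
  imports "HOL-Analysis.Analysis"
begin

definition ivp_sol :: "real \<Rightarrow> (real \<Rightarrow> real) \<Rightarrow> real \<Rightarrow> (real \<Rightarrow> real) \<Rightarrow> bool" where
  "ivp_sol a f xi y \<longleftrightarrow> y xi = 0 \<and>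
     (\<forall>x. (y has_real_derivative (- a * y x - f x)) (at x))"

definition ivp :: "real \<Rightarrow> (real \<Rightarrow> real) \<Rightarrow> real \<Rightarrow> real \<Rightarrow> real" where
  "ivp a f xi = (THE y. ivp_sol a f xi y)"

definition first_zero :: "real \<Rightarrow> (real \<Rightarrow> real) \<Rightarrow> real \<Rightarrow> real" where
  "first_zero a f xi = (THE p. p > xi \<and> ivp a f xi p = 0 \<and>
       (\<forall>x. xi < x \<and> x < p \<longrightarrow> ivp a f xi x \<noteq> 0))"

definition P_plus :: "real \<Rightarrow> real \<Rightarrow> real" where
  "P_plus a xi = first_zero a (\<lambda>x. sin (3 * pi * x / 2)) xi"

definition P_minus :: "real \<Rightarrow> real \<Rightarrow> real" where
  "P_minus a xi = first_zero a (\<lambda>x. sin (pi * x / 2)) xi"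

end

theory Submission
  imports Defs
begin

lemma ivp_unique:
  assumes "ivp_sol a f xi y" "ivp_sol a f xi z"
  shows "y = z"
proof
  fix x
  define k where "k t = exp (a*t) * (y t - z t)" for t
  have d: "\<forall>t. (k has_real_derivative 0) (at t)"
  proof
    fix t
    have "(k has_real_derivative (a * exp (a*t) * (y t - z t) + exp (a*t) * ((- a * y t - f t) - (- a * z t - f t)))) (at t)"
      unfolding k_def using assms unfolding ivp_sol_def
      by (auto intro!: derivative_eq_intros)
    then show "(k has_real_derivative 0) (at t)" by (simp add: algebra_simps)
  qed
  have "k x = k xi" using DERIV_isconst_all[OF d] .
  also have "k xi = 0" using assms unfolding ivp_sol_def k_def by simp
  finally show "y x = z x" unfolding k_def by simp
qed

lemma ivp_eq: "ivp_sol a f xi y \<Longrightarrow> ivp a f xi = y"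
  unfolding ivp_def using ivp_unique by blast

lemma sol_from_g:
  assumes "\<forall>x. (g has_real_derivative (-(exp(a*x) * f x))) (at x)" "g xi = 0"
  shows "ivp_sol a f xi (\<lambda>x. exp (-a*x) * g x)"
  unfolding ivp_sol_def
proof (intro conjI allI)
  show "exp (- a * xi) * g xi = 0" using assms by simp
  fix x
  have "((\<lambda>x. exp (-a*x) * g x) has_real_derivative
      (-a * exp (-a*x) * g x + exp (-a*x) * (-(exp(a*x) * f x)))) (at x)"
    using assms by (auto intro!: derivative_eq_intros)
  moreover have "exp (-a*x) * exp(a*x) = 1" by (simp add: exp_add[symmetric])
  ultimately show "((\<lambda>x. exp (-a*x) * g x) has_real_derivative (- a * (exp (-a*x) * g x) - f x)) (at x)"
    by (simp add: algebra_simps)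
qed

lemma first_zero_eq:
  assumes "ivp a f xi = y" "p > xi" "y p = 0" "\<forall>x. xi < x \<and> x < p \<longrightarrow> y x \<noteq> 0"
  shows "first_zero a f xi = p"
  unfolding first_zero_def assms(1)
proof (rule the_equality)
  show "xi < p \<and> y p = 0 \<and> (\<forall>x. xi < x \<and> x < p \<longrightarrow> y x \<noteq> 0)" using assms by auto
  fix q assume q: "xi < q \<and> y q = 0 \<and> (\<forall>x. xi < x \<and> x < q \<longrightarrow> y x \<noteq> 0)"
  show "q = p"
  proof (rule ccontr)
    assume "q \<noteq> p"
    then have "q < p \<or> p < q" by auto
    then show False using q assms by auto
  qed
qed

lemma core:
  fixes G G' :: "real \<Rightarrow> real"
  assumes der: "\<forall>x. (G has_real_derivative G' x) (at x)" and G0: "G xi = 0"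
    and "xi < c" "c < d"
    and neg: "\<forall>x. xi < x \<and> x < c \<longrightarrow> G' x < 0"
    and pos: "\<forall>x. c < x \<and> x < d \<longrightarrow> G' x > 0"
    and Gd: "G d > 0"
  shows "\<exists>p. c < p \<and> p < d \<and> G p = 0 \<and> (\<forall>x. xi < x \<and> x < p \<longrightarrow> G x \<noteq> 0)"
proof -
  have cont: "continuous_on S G" for S
    using der by (meson DERIV_continuous continuous_at_imp_continuous_on)
  have dec: "G x < 0" if "xi < x" "x \<le> c" for x
  proof -
    have "G xi > G x"
      by (rule DERIV_neg_imp_decreasing_open[OF \<open>xi < x\<close> _ cont]) (use der neg that in auto)
    then show ?thesis using G0 by simp
  qed
  have inc: "G u < G v" if "c \<le> u" "u < v" "v \<le> d" for u v
    by (rule DERIV_pos_imp_increasing_open[OF \<open>u < v\<close> _ cont]) (use der pos that in auto)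
  have Gc: "G c < 0" using dec assms by auto
  obtain p where p: "c \<le> p" "p \<le> d" "G p = 0"
    using IVT'[of G c 0 d, OF _ _ _ cont] Gc Gd \<open>c < d\<close> by auto
  have "p \<noteq> c" "p \<noteq> d" using p Gc Gd by auto
  with p have pcd: "c < p" "p < d" by auto
  have "\<forall>x. xi < x \<and> x < p \<longrightarrow> G x \<noteq> 0"
  proof (intro allI impI)
    fix x assume x: "xi < x \<and> x < p"
    show "G x \<noteq> 0"
    proof (cases "x \<le> c")
      case True then show ?thesis using dec x by fastforce
    next
      case False then have "G x < G p" using inc x pcd by auto
      then show ?thesis using p by simp
    qed
  qed
  then show ?thesis using pcd p by blast
qed

lemma main:
  assumes der: "\<forall>x. (g has_real_derivative (-(exp(a*x) * f x))) (at x)" and g0: "g xi = 0"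
    and "xi < c" "c < d"
    and neg: "\<forall>x. xi < x \<and> x < c \<longrightarrow> \<sigma> * f x > 0"
    and pos: "\<forall>x. c < x \<and> x < d \<longrightarrow> \<sigma> * f x < 0"
    and gd: "\<sigma> * g d > 0"
  shows "first_zero a f xi \<in> {c<..<d}"
proof -
  have s0: "\<sigma> \<noteq> 0" using gd by auto
  have der2: "\<forall>x. ((\<lambda>x. \<sigma> * g x) has_real_derivative (- exp (a*x) * (\<sigma> * f x))) (at x)"
  proof
    fix x
    have "((\<lambda>x. \<sigma> * g x) has_real_derivative (\<sigma> * (-(exp(a*x) * f x)))) (at x)"
      using der by (auto intro!: derivative_eq_intros)
    then show "((\<lambda>x. \<sigma> * g x) has_real_derivative (- exp (a*x) * (\<sigma> * f x))) (at x)"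
      by (simp add: algebra_simps)
  qed
  have n: "\<forall>x. xi < x \<and> x < c \<longrightarrow> - exp (a*x) * (\<sigma> * f x) < 0"
    using neg by (auto simp: mult_pos_pos)
  have p: "\<forall>x. c < x \<and> x < d \<longrightarrow> - exp (a*x) * (\<sigma> * f x) > 0"
    using pos by (auto simp: mult_pos_neg)
  obtain p where p: "c < p" "p < d" "\<sigma> * g p = 0" "\<forall>x. xi < x \<and> x < p \<longrightarrow> \<sigma> * g x \<noteq> 0"
    using core[OF der2 _ \<open>xi < c\<close> \<open>c < d\<close> n p gd] g0 by auto
  have iv: "ivp a f xi = (\<lambda>x. exp (-a*x) * g x)" by (rule ivp_eq[OF sol_from_g[OF der g0]])
  have "first_zero a f xi = p"
    by (rule first_zero_eq[OF iv]) (use p s0 \<open>xi < c\<close> in auto)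
  then show ?thesis using p by auto
qed

lemma sin_shift: "sin (x + 2 * real m * pi) = sin x"
  by (simp add: sin_add)


lemma gder:
  fixes a w K :: real
  assumes "w > 0"
  shows "((\<lambda>x. -(exp(a*x)*(a * sin (w*x) - w * cos (w*x)) - K)/(a^2+w^2)) has_real_derivative
          -(exp(a*x) * sin (w*x))) (at x)"
proof -
  have "a^2 + w^2 > 0" using assms by (simp add: add_nonneg_pos)
  then have nz: "a^2 + w^2 \<noteq> 0" by linarith
  have "((\<lambda>x. -(exp(a*x)*(a * sin (w*x) - w * cos (w*x)) - K)/(a^2+w^2)) has_real_derivative
          -((a*exp(a*x)*(a * sin (w*x) - w * cos (w*x)) + exp(a*x)*(a*(cos(w*x)*w) + w*(sin(w*x)*w))) - 0)/(a^2+w^2)) (at x)"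
    using nz assms by (auto intro!: derivative_eq_intros)
  also have "-((a*exp(a*x)*(a * sin (w*x) - w * cos (w*x)) + exp(a*x)*(a*(cos(w*x)*w) + w*(sin(w*x)*w))) - 0)/(a^2+w^2)
      = -(exp(a*x) * sin (w*x))"
  proof -
    have "-((a*exp(a*x)*(a * sin (w*x) - w * cos (w*x)) + exp(a*x)*(a*(cos(w*x)*w) + w*(sin(w*x)*w))) - 0)
       = -(exp(a*x) * sin (w*x)) * (a^2+w^2)" by (simp add: algebra_simps power2_eq_square)
    then show ?thesis using nz by simp
  qed
  finally show ?thesis .
qed

lemma part_minus:
  assumes "a > 0"
  shows "P_minus a (4 * real n) \<in> {4 * real n + 2 <..< 4 * real n + 4}"
proof -
  define xi where "xi = 4 * real n"
  define w :: real where "w = pi/2"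
  define K where "K = exp(a*xi)*(a * sin (w*xi) - w * cos (w*xi))"
  define g where "g x = -(exp(a*x)*(a * sin (w*x) - w * cos (w*x)) - K)/(a^2+w^2)" for x
  have w0: "w > 0" unfolding w_def by simp
  have feq: "(\<lambda>x. sin (pi * x / 2)) = (\<lambda>x. sin (w*x))" unfolding w_def by (simp add: field_simps)
  have shift: "sin (w*x) = sin (w*(x - xi))" for x
  proof -
    have "w*x = w*(x-xi) + 2 * real n * pi" unfolding w_def xi_def by (simp add: field_simps)
    then show ?thesis by (simp add: sin_add)
  qed
  have cshift: "cos (w*x) = cos (w*(x - xi))" for x
  proof -
    have "w*x = w*(x-xi) + 2 * real n * pi" unfolding w_def xi_def by (simp add: field_simps)
    then show ?thesis by (simp add: cos_add)
  qed
  have der: "\<forall>x. (g has_real_derivative (-(exp(a*x) * sin (w*x)))) (at x)"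
    unfolding g_def[abs_def] using gder[OF w0] by blast
  have g0: "g xi = 0" unfolding g_def K_def by simp
  have neg: "\<forall>x. xi < x \<and> x < xi + 2 \<longrightarrow> 1 * sin (w*x) > 0"
  proof (intro allI impI)
    fix x assume x: "xi < x \<and> x < xi + 2"
    have "0 < w*(x-xi)" "w*(x-xi) < pi" using x unfolding w_def by auto
    then show "1 * sin (w*x) > 0" using shift[of x] sin_gt_zero[of "w*(x-xi)"] by simp
  qed
  have pos: "\<forall>x. xi + 2 < x \<and> x < xi + 4 \<longrightarrow> 1 * sin (w*x) < 0"
  proof (intro allI impI)
    fix x assume x: "xi + 2 < x \<and> x < xi + 4"
    have "pi*2 < pi*(x-xi)" "pi*(x-xi) < pi*4" using x by auto
    then have h1: "0 < w*(x-xi) - pi" and h2: "w*(x-xi) - pi < pi" unfolding w_def by auto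
    have "sin (w*(x-xi) - pi) > 0" using sin_gt_zero[OF h1 h2] .
    moreover have "sin (w*(x-xi)) = - sin (w*(x-xi) - pi)"
      using sin_periodic_pi[of "w*(x-xi) - pi"] by simp
    ultimately show "1 * sin (w*x) < 0" using shift by simp
  qed
  have gd: "1 * g (xi + 4) > 0"
  proof -
    have s: "sin (w*(xi+4)) = 0" "cos (w*(xi+4)) = 1" "sin (w*xi) = 0" "cos (w*xi) = 1"
      using shift[of "xi+4"] cshift[of "xi+4"] shift[of xi] cshift[of xi] unfolding w_def
      by (simp_all add: cos_add sin_add)
    have "exp (a*xi) < exp (a*(xi+4))" using assms by simp
    moreover have "a^2 + w^2 > 0" using w0 by (simp add: add_nonneg_pos)
    ultimately show ?thesis unfolding g_def K_def using s w0 by (simp add: divide_pos_pos field_simps)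
  qed
  have "first_zero a (\<lambda>x. sin (w*x)) xi \<in> {xi+2<..<xi+4}"
    by (rule main[OF der g0 _ _ neg pos gd]) auto
  then show ?thesis unfolding P_minus_def feq xi_def .
qed


lemma part_plus:
  assumes "a > 0" "n \<ge> 1"
  shows "P_plus a (4 * real n - 2) \<in> {4 * real n - 4/3 <..< 4 * real n - 2/3}"
proof -
  define xi where "xi = 4 * real n - 2"
  define w :: real where "w = 3*pi/2"
  define m where "m = 3*n - 2"
  have rm: "real m = 3 * real n - 2" unfolding m_def using assms(2) by (simp add: of_nat_diff)
  define K where "K = exp(a*xi)*(a * sin (w*xi) - w * cos (w*xi))"
  define g where "g x = -(exp(a*x)*(a * sin (w*x) - w * cos (w*x)) - K)/(a^2+w^2)" for x
  have w0: "w > 0" unfolding w_def by simp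
  have feq: "(\<lambda>x. sin (3 * pi * x / 2)) = (\<lambda>x. sin (w*x))" unfolding w_def by (simp add: field_simps)
  have arg: "w*x = (w*(x-xi) + pi) + 2 * real m * pi" for x
    unfolding w_def xi_def rm by (simp add: field_simps)
  have shift: "sin (w*x) = - sin (w*(x - xi))" for x
    unfolding arg[of x] by (simp add: sin_add)
  have cshift: "cos (w*x) = - cos (w*(x - xi))" for x
    unfolding arg[of x] by (simp add: cos_add)
  have der: "\<forall>x. (g has_real_derivative (-(exp(a*x) * sin (w*x)))) (at x)"
    unfolding g_def[abs_def] using gder[OF w0] by blast
  have g0: "g xi = 0" unfolding g_def K_def by simp
  have neg: "\<forall>x. xi < x \<and> x < xi + 2/3 \<longrightarrow> -1 * sin (w*x) > 0"
  proof (intro allI impI)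
    fix x assume x: "xi < x \<and> x < xi + 2/3"
    have "pi*0 < pi*(x-xi)" "pi*(x-xi) < pi*(2/3)" using x by auto
    then have h1: "0 < w*(x-xi)" and h2: "w*(x-xi) < pi" unfolding w_def by auto
    show "-1 * sin (w*x) > 0" using shift[of x] sin_gt_zero[OF h1 h2] by simp
  qed
  have pos: "\<forall>x. xi + 2/3 < x \<and> x < xi + 4/3 \<longrightarrow> -1 * sin (w*x) < 0"
  proof (intro allI impI)
    fix x assume x: "xi + 2/3 < x \<and> x < xi + 4/3"
    have "pi*(2/3) < pi*(x-xi)" "pi*(x-xi) < pi*(4/3)" using x by auto
    then have h1: "0 < w*(x-xi) - pi" and h2: "w*(x-xi) - pi < pi" unfolding w_def by auto
    have "sin (w*(x-xi) - pi) > 0" using sin_gt_zero[OF h1 h2] .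
    moreover have "sin (w*(x-xi)) = - sin (w*(x-xi) - pi)"
      using sin_periodic_pi[of "w*(x-xi) - pi"] by simp
    ultimately show "-1 * sin (w*x) < 0" using shift[of x] by linarith
  qed
  have gd: "-1 * g (xi + 4/3) > 0"
  proof -
    have e: "w*(xi+4/3-xi) = 2*pi" unfolding w_def by simp
    have s: "sin (w*(xi+4/3)) = 0" "cos (w*(xi+4/3)) = -1"
      using shift[of "xi+4/3"] cshift[of "xi+4/3"] unfolding e by simp_all
    have s': "sin (w*xi) = 0" "cos (w*xi) = -1"
      using shift[of xi] cshift[of xi] by simp_all
    have "exp (a*xi) < exp (a*(xi+4/3))" using assms by simp
    moreover have "a^2 + w^2 > 0" using w0 by (simp add: add_nonneg_pos)
    ultimately show ?thesis unfolding g_def K_def using s s' w0 by (simp add: divide_pos_pos field_simps)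
  qed
  have "first_zero a (\<lambda>x. sin (w*x)) xi \<in> {xi+2/3<..<xi+4/3}"
    by (rule main[OF der g0 _ _ neg pos gd]) auto
  moreover have "xi + 2/3 = 4 * real n - 4/3" "xi + 4/3 = 4 * real n - 2/3" unfolding xi_def by simp_all
  ultimately have "first_zero a (\<lambda>x. sin (w*x)) xi \<in> {4 * real n - 4/3<..<4 * real n - 2/3}"
    by (simp only:)
  then show ?thesis unfolding P_plus_def feq xi_def .
qed

theorem lemma7:
  fixes a :: real
  assumes "a > 0"
  shows "(\<forall>n::nat. n \<ge> 1 \<longrightarrow>
            P_plus a (4 * real n - 2) \<in> {4 * real n - 4/3 <..< 4 * real n - 2/3}) \<and>
         (\<forall>n::nat. P_minus a (4 * real n) \<in> {4 * real n + 2 <..< 4 * real n + 4})"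
  using part_plus[OF assms] part_minus[OF assms] by blast

end
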